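(* Let $W,V$ be B-DMCs on a common output alphabet. Let $B_1,B_2,\dots$ be i.i.d. uniform on $\{-,+\}$, set $i_0=1$ and $i_{n}=2i_{n-1}-1$ if $B_n=-$, $i_n=2i_{n-1}$ if $B_n=+$, and let $X_n=\mathbb P_W\big[L_{V_{2^n}^{(i_n)}}(y_1^{2^n})=1\big]$. Then $(X_n)_{n\ge0}$ is a submartingale with respect to the filtration generated by $B_1,B_2,\dots$, taking values in $[0,1]$; it converges almost surely, and its almost sure limit takes values in $\{0,1\}$.
   Context: A B-DMC $W:\{0,1\}\to\mathcal Y$ is given by transition probabilities $W(y|x)$, $\mathcal Y$ finite; $L_W(y)=W(y|1)/W(y|0)$. For a B-DMC $W$: $W^-(y_1y_2|u_1)=\sum_{u_2}\tfrac12W(y_1|u_1\oplus u_2)W(y_2|u_2)$, $W^+(y_1y_2u_1|u_2)=\tfrac12W(y_1|u_1\oplus u_2)W(y_2|u_2)$. Synthetic channels: $W_1^{(1)}=W$, $W_{2N}^{(2i-1)}=(W_N^{(i)})^-$, $W_{2N}^{(2i)}=(W_N^{(i)})^+$; an output of $W_N^{(i)}$ is written $(y_1^N,u_1^{i-1})$ as in Arıkan's construction, and $L_{V_N^{(i)}}(y_1^N):=L_{V_N^{(i)}}(y_1^N,0_1^{i-1})$. These satisfy, with $L_1=L_{V_N^{(i)}}(y_1^N)$, $L_2=L_{V_N^{(i)}}(y_{N+1}^{2N})$: $L_{V_{2N}^{(2i-1)}}(y_1^{2N})=\frac{L_1+L_2}{1+L_1L_2}$, $L_{V_{2N}^{(2i)}}(y_1^{2N})=L_1L_2$.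 Notation: $W(y_1^N|0_1^N)=\prod_{j}W(y_j|0)$ and $\mathbb P_W[E]=\sum_{y_1^N}W(y_1^N|0_1^N)\mathbf 1\{E\}$. *)

theory Defs
  imports "HOL-Probability.Probability"
begin

(* A B-DMC W : {0,1} -> Y with finite output alphabet 'y; the input bit 0 is False,
   1 is True; W y x is the transition probability W(y|x). *)
definition bdmc :: "('y::finite \<Rightarrow> bool \<Rightarrow> real) \<Rightarrow> bool" where
  "bdmc W \<longleftrightarrow> (\<forall>y x. 0 \<le> W y x) \<and> (\<forall>x. (\<Sum>y\<in>UNIV. W y x) = 1)"

(* synth V bs ys u = V_N^{(i)}((y_1^N, 0_1^{i-1}) | u), the transition probability of the
   synthetic channel at output y_1^N together with the all-zero past bits.
   bs = [B_n, B_{n-1}, ..., B_1] (outermost transform first), True = '+', False = '-',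
   N = 2^(length bs) = length ys; the first half of ys feeds L_1, the second half L_2. *)
fun synth :: "('y \<Rightarrow> bool \<Rightarrow> real) \<Rightarrow> bool list \<Rightarrow> 'y list \<Rightarrow> bool \<Rightarrow> real" where
  "synth V [] ys u = V (hd ys) u"
| "synth V (b # bs) ys u =
     (let ys1 = take (length ys div 2) ys; ys2 = drop (length ys div 2) ys in
      if b then (1/2) * synth V bs ys1 u * synth V bs ys2 u
      else (\<Sum>u2\<in>UNIV. (1/2) * synth V bs ys1 (u \<noteq> u2) * synth V bs ys2 u2))"

(* The event L_{V_N^{(i)}}(y_1^N) = 1, i.e. V_N^{(i)}(y,0|1) / V_N^{(i)}(y,0|0) = 1,
   with the ratio read projectively (0/0 counts as 1, a/0 = infinity for a > 0). *)
definition LR_is_one :: "('y \<Rightarrow> bool \<Rightarrow> real) \<Rightarrow> bool list \<Rightarrow> 'y list \<Rightarrow> bool" where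
  "LR_is_one V bs ys \<longleftrightarrow> synth V bs ys True = synth V bs ys False"

definition PW_LR_one :: "('y::finite \<Rightarrow> bool \<Rightarrow> real) \<Rightarrow> ('y \<Rightarrow> bool \<Rightarrow> real) \<Rightarrow> bool list \<Rightarrow> real" where
  "PW_LR_one W V bs =
     (\<Sum>ys\<in>{ys. length ys = 2 ^ length bs}.
        (\<Prod>j<length ys. W (ys ! j) False) * (if LR_is_one V bs ys then 1 else 0))"

(* Sample space of B_1, B_2, ...: omega k = B_{k+1}, i.i.d. uniform on {-,+} = {False, True}. *)
definition coin_space :: "(nat \<Rightarrow> bool) measure" where
  "coin_space = PiM UNIV (\<lambda>_. measure_pmf (pmf_of_set (UNIV :: bool set)))"

definition coin_filtration :: "nat \<Rightarrow> (nat \<Rightarrow> bool) measure" where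
  "coin_filtration n = sigma (space coin_space)
      {{\<omega> \<in> space coin_space. \<omega> k = b} | k b. k < n}"

definition path :: "nat \<Rightarrow> (nat \<Rightarrow> bool) \<Rightarrow> bool list" where
  "path n \<omega> = rev (map \<omega> [0..<n])"

definition submartingale :: "'a measure \<Rightarrow> (nat \<Rightarrow> 'a measure) \<Rightarrow> (nat \<Rightarrow> 'a \<Rightarrow> real) \<Rightarrow> bool" where
  "submartingale M F X \<longleftrightarrow>
     (\<forall>n. subalgebra M (F n)) \<and> (\<forall>n m. n \<le> m \<longrightarrow> sets (F n) \<subseteq> sets (F m)) \<and>
     (\<forall>n. X n \<in> borel_measurable (F n)) \<and> (\<forall>n. integrable M (X n)) \<and>
     (\<forall>n. AE \<omega> in M. X n \<omega> \<le> real_cond_exp M (F n) (X (Suc n)) \<omega>)"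

end

theory Submission
  imports Defs
begin



definition wt :: "('y \<Rightarrow> bool \<Rightarrow> real) \<Rightarrow> 'y list \<Rightarrow> real" where
  "wt W ys = prod_list (map (\<lambda>y. W y False) ys)"

lemma wt_eq: "(\<Prod>j<length ys. W (ys ! j) False) = wt W ys"
  by (induction ys) (simp_all add: prod.lessThan_Suc_shift wt_def del: prod.lessThan_Suc)

lemma wt_append: "wt W (xs @ ys) = wt W xs * wt W ys"
  by (simp add: wt_def)

lemma lists_len_finite: "finite {ys::'y::finite list. length ys = k}"
  using finite_lists_length_eq[of "UNIV::'y set" k] by simp

lemma sum_lists_Suc:
  fixes g :: "'y::finite list \<Rightarrow> real"
  shows "(\<Sum>ys\<in>{ys. length ys = Suc k}. g ys) = (\<Sum>y\<in>UNIV. \<Sum>ys\<in>{ys. length ys = k}. g (y # ys))"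
proof -
  have e: "{ys::'y list. length ys = Suc k} = (\<lambda>(y,ys). y # ys) ` (UNIV \<times> {ys. length ys = k})"
    by (auto simp: length_Suc_conv image_iff)
  have i: "inj_on (\<lambda>(y,ys). y # ys) (UNIV \<times> {ys::'y list. length ys = k})"
    by (auto simp: inj_on_def)
  show ?thesis
    unfolding e sum.reindex[OF i] using lists_len_finite
    by (simp add: sum.cartesian_product case_prod_unfold)
qed

lemma sum_lists_append:
  fixes g :: "'y::finite list \<Rightarrow> real"
  shows "(\<Sum>ys\<in>{ys. length ys = a + b}. g ys) =
     (\<Sum>xs\<in>{ys. length ys = a}. \<Sum>zs\<in>{ys. length ys = b}. g (xs @ zs))"
proof -
  have e: "{ys::'y list. length ys = a + b} = (\<lambda>(xs,zs). xs @ zs) ` ({ys. length ys = a} \<times> {ys. length ys = b})"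
  proof (rule set_eqI, rule iffI)
    fix ys :: "'y list" assume "ys \<in> {ys. length ys = a + b}"
    then show "ys \<in> (\<lambda>(xs,zs). xs @ zs) ` ({ys. length ys = a} \<times> {ys. length ys = b})"
      by (intro image_eqI[of _ _ "(take a ys, drop a ys)"]) auto
  qed auto
  have i: "inj_on (\<lambda>(xs,zs). xs @ zs) ({ys::'y list. length ys = a} \<times> {ys. length ys = b})"
    by (auto simp: inj_on_def)
  show ?thesis
    unfolding e sum.reindex[OF i] using lists_len_finite
    by (simp add: sum.cartesian_product case_prod_unfold)
qed

lemma wt_nonneg: "bdmc W \<Longrightarrow> 0 \<le> wt W ys"
  unfolding wt_def bdmc_def by (induction ys) auto

lemma wt_sum: "bdmc W \<Longrightarrow> (\<Sum>ys\<in>{ys. length ys = k}. wt W ys) = 1"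
proof (induction k)
  case 0 then show ?case by (simp add: wt_def)
next
  case (Suc k)
  have "(\<Sum>ys\<in>{ys. length ys = Suc k}. wt W ys) = (\<Sum>y\<in>UNIV. W y False * (\<Sum>ys\<in>{ys. length ys = k}. wt W ys))"
    by (subst sum_lists_Suc) (simp add: wt_def sum_distrib_left)
  also have "\<dots> = 1" using Suc by (simp add: bdmc_def)
  finally show ?case .
qed

definition ff where "ff W V bs = PW_LR_one W V bs"

lemma PW_alt: "PW_LR_one W V bs = (\<Sum>ys\<in>{ys. length ys = 2 ^ length bs}. wt W ys * (if LR_is_one V bs ys then 1 else 0))"
  unfolding PW_LR_one_def wt_eq by (rule sum.cong) auto

lemma PW_bounds: assumes "bdmc W" shows "0 \<le> PW_LR_one W V bs" "PW_LR_one W V bs \<le> 1"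
proof -
  show "0 \<le> PW_LR_one W V bs" unfolding PW_alt using wt_nonneg[OF assms] by (intro sum_nonneg) auto
  have "PW_LR_one W V bs \<le> (\<Sum>ys\<in>{ys. length ys = 2 ^ length bs}. wt W ys)"
    unfolding PW_alt using wt_nonneg[OF assms] by (intro sum_mono) auto
  then show "PW_LR_one W V bs \<le> 1" using wt_sum[OF assms] by simp
qed

lemma synth_split:
  assumes "length xs = 2 ^ length bs" "length zs = 2 ^ length bs"
  shows "synth V (b # bs) (xs @ zs) u =
     (if b then (1/2) * synth V bs xs u * synth V bs zs u
      else (\<Sum>u2\<in>UNIV. (1/2) * synth V bs xs (u \<noteq> u2) * synth V bs zs u2))"
  using assms by (simp add: Let_def)

lemma LR_minus:
  assumes "length xs = 2 ^ length bs" "length zs = 2 ^ length bs"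
  shows "LR_is_one V (False # bs) (xs @ zs) \<longleftrightarrow> LR_is_one V bs xs \<or> LR_is_one V bs zs"
proof -
  have *: "\<And>a1 b1 a2 b2::real. (a1*b2/2 + b1*a2/2 = b1*b2/2 + a1*a2/2) \<longleftrightarrow> (a1 = b1 \<or> a2 = b2)"
  proof -
    fix a1 b1 a2 b2 :: real
    have "(a1*b2/2 + b1*a2/2 = b1*b2/2 + a1*a2/2) \<longleftrightarrow> (a1 - b1) * (b2 - a2) = 0"
      by (auto simp: algebra_simps)
    then show "(a1*b2/2 + b1*a2/2 = b1*b2/2 + a1*a2/2) \<longleftrightarrow> (a1 = b1 \<or> a2 = b2)" by auto
  qed
  show ?thesis unfolding LR_is_one_def synth_split[OF assms]
    apply (simp add: UNIV_bool)
    by (rule *)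
qed

lemma LR_plus:
  assumes "length xs = 2 ^ length bs" "length zs = 2 ^ length bs"
     "LR_is_one V bs xs" "LR_is_one V bs zs"
  shows "LR_is_one V (True # bs) (xs @ zs)"
  using assms unfolding LR_is_one_def synth_split[OF assms(1,2)] by simp

lemma PW_Cons_sum:
  "PW_LR_one W V (b # bs) = (\<Sum>xs\<in>{ys. length ys = 2 ^ length bs}. \<Sum>zs\<in>{ys. length ys = 2 ^ length bs}.
      wt W xs * wt W zs * (if LR_is_one V (b # bs) (xs @ zs) then 1 else 0))"
  unfolding PW_alt by (simp add: mult_2 sum_lists_append wt_append)

lemma PW_minus: assumes "bdmc W"
  shows "PW_LR_one W V (False # bs) = 2 * PW_LR_one W V bs - (PW_LR_one W V bs)^2"
proof -
  let ?L = "{ys::'a list. length ys = 2 ^ length bs}"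
  let ?I = "\<lambda>ys. (if LR_is_one V bs ys then 1 else 0::real)"
  let ?p = "PW_LR_one W V bs"
  have p: "?p = (\<Sum>xs\<in>?L. wt W xs * ?I xs)" by (rule PW_alt)
  have "PW_LR_one W V (False # bs) = (\<Sum>xs\<in>?L. \<Sum>zs\<in>?L.
      wt W xs * ?I xs * wt W zs + wt W xs * (wt W zs * ?I zs) - (wt W xs * ?I xs) * (wt W zs * ?I zs))"
    unfolding PW_Cons_sum by (intro sum.cong refl) (auto simp: LR_minus)
  also have "\<dots> = (\<Sum>xs\<in>?L. wt W xs * ?I xs) * (\<Sum>zs\<in>?L. wt W zs) + (\<Sum>xs\<in>?L. wt W xs) * (\<Sum>zs\<in>?L. wt W zs * ?I zs)
      - (\<Sum>xs\<in>?L. wt W xs * ?I xs) * (\<Sum>zs\<in>?L. wt W zs * ?I zs)"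
    unfolding sum_subtractf sum.distrib sum_product by simp
  also have "\<dots> = ?p * 1 + 1 * ?p - ?p * ?p"
    unfolding p wt_sum[OF assms] ..
  finally show ?thesis by (simp add: power2_eq_square)
qed

lemma PW_plus: assumes "bdmc W"
  shows "PW_LR_one W V (True # bs) \<ge> (PW_LR_one W V bs)^2"
proof -
  let ?L = "{ys::'a list. length ys = 2 ^ length bs}"
  let ?I = "\<lambda>ys. (if LR_is_one V bs ys then 1 else 0::real)"
  let ?p = "PW_LR_one W V bs"
  have p: "?p = (\<Sum>xs\<in>?L. wt W xs * ?I xs)" by (rule PW_alt)
  have "?p^2 = (\<Sum>xs\<in>?L. \<Sum>zs\<in>?L. (wt W xs * ?I xs) * (wt W zs * ?I zs))"
    unfolding power2_eq_square p sum_product ..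
  also have "\<dots> \<le> PW_LR_one W V (True # bs)"
    unfolding PW_Cons_sum using wt_nonneg[OF assms]
    by (intro sum_mono) (auto simp: LR_plus)
  finally show ?thesis .
qed




abbreviation "BC \<equiv> measure_pmf (pmf_of_set (UNIV :: bool set))"

lemma coin_pps: "product_prob_space (\<lambda>_::nat. BC)"
  by (simp add: product_prob_space_def product_prob_space_axioms_def product_sigma_finite_def
      prob_space_measure_pmf prob_space_imp_sigma_finite)

lemma space_coin[simp]: "space coin_space = UNIV"
  by (simp add: coin_space_def space_PiM)

lemma coin_prob: "prob_space coin_space"
proof -
  interpret P: product_prob_space "\<lambda>_::nat. BC" UNIV by (rule coin_pps)
  show ?thesis unfolding coin_space_def by (rule P.P.prob_space_axioms)
qed

interpretation CS: prob_space coin_space by (rule coin_prob)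

lemma path_length[simp]: "length (path N \<omega>) = N"
  by (simp add: path_def)

lemma path_Suc: "path (Suc n) \<omega> = \<omega> n # path n \<omega>"
  by (simp add: path_def)

lemma path_eq_iff: "length bs = N \<Longrightarrow> path N \<omega> = bs \<longleftrightarrow> (\<forall>i<N. \<omega> i = rev bs ! i)"
  unfolding path_def rev_swap by (auto simp: list_eq_iff_nth_eq)

lemma path_set_emb: assumes "length bs = N"
  shows "{\<omega>. path N \<omega> = bs} = prod_emb UNIV (\<lambda>_. BC) {..<N} (PiE {..<N} (\<lambda>i. {rev bs ! i}))"
proof -
  have u: "(PiE UNIV (\<lambda>_. UNIV)) = (UNIV :: (nat \<Rightarrow> bool) set)" by (auto simp: PiE_def extensional_def)
  show ?thesis
    by (rule set_eqI) (simp add: path_eq_iff[OF assms] prod_emb_def space_PiM restrict_PiE_iff u Pi_iff lessThan_def)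
qed

lemma emeasure_path: assumes "length bs = N"
  shows "emeasure coin_space {\<omega>. path N \<omega> = bs} = ennreal ((1/2)^N)"
proof -
  interpret P: product_prob_space "\<lambda>_::nat. BC" UNIV by (rule coin_pps)
  have "emeasure coin_space {\<omega>. path N \<omega> = bs} = (\<Prod>i<N. emeasure BC {rev bs ! i})"
    unfolding coin_space_def path_set_emb[OF assms] by (rule P.emeasure_PiM_emb) auto
  also have "\<dots> = (\<Prod>i<N. ennreal (1/2))"
    by (simp add: emeasure_pmf_single)
  also have "\<dots> = ennreal (\<Prod>i<N. 1/2)" by (rule prod_ennreal) simp
  also have "\<dots> = ennreal ((1/2)^N)" by simp
  finally show ?thesis .
qed

lemma path_meas_gen:
  assumes "space F = UNIV" "\<And>i b. i < N \<Longrightarrow> {\<omega>. \<omega> i = b} \<in> sets F"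
  shows "path N \<in> F \<rightarrow>\<^sub>M count_space UNIV"
proof -
  have "{\<omega>. path N \<omega> = bs} \<in> sets F" for bs
  proof (cases "length bs = N")
    case True
    show ?thesis
    proof (cases "N = 0")
      case True
      then have "{\<omega>. path N \<omega> = bs} = UNIV" using \<open>length bs = N\<close> by (auto simp: path_def)
      then show ?thesis using assms(1) sets.top[of F] by simp
    next
      case False
    have "{\<omega>. path N \<omega> = bs} = UNIV \<inter> (\<Inter>i<N. {\<omega>. \<omega> i = rev bs ! i})"
      by (rule set_eqI) (simp add: path_eq_iff[OF \<open>length bs = N\<close>] lessThan_def)
    also have "\<dots> \<in> sets F"
      using assms sets.top[of F] False by (intro sets.Int sets.finite_INT) auto
    finally show ?thesis .
    qed
  next
    case False
    then have "{\<omega>. path N \<omega> = bs} = {}" by auto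
    then show ?thesis by simp
  qed
  note * = this
  show ?thesis
    unfolding measurable_count_space_eq2_countable
  proof (intro conjI ballI)
    fix a :: "bool list"
    have "path N -` {a} \<inter> space F = {\<omega>. path N \<omega> = a}" by (auto simp: assms(1))
    then show "path N -` {a} \<inter> space F \<in> sets F" using * by simp
  qed simp
qed

lemma coin_comp_sets: "{\<omega>. \<omega> i = b} \<in> sets coin_space"
proof -
  have "(\<lambda>\<omega>. \<omega> i) \<in> coin_space \<rightarrow>\<^sub>M BC"
    unfolding coin_space_def by (rule measurable_component_singleton) simp
  then have "(\<lambda>\<omega>. \<omega> i) -` {b} \<inter> space coin_space \<in> sets coin_space"
    by (rule measurable_sets) simp
  then show ?thesis by (simp add: vimage_def)
qed

lemma path_meas: "path N \<in> coin_space \<rightarrow>\<^sub>M count_space UNIV"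
  by (rule path_meas_gen) (auto simp: coin_comp_sets)

lemma path_fun_meas[measurable]: "(\<lambda>\<omega>. g (path N \<omega>) :: real) \<in> borel_measurable coin_space"
  using measurable_compose[OF path_meas, of g borel] by simp

lemma path_indicator_sum:
  fixes g :: "bool list \<Rightarrow> real"
  shows "g (path N \<omega>) = (\<Sum>bs\<in>{bs. length bs = N}. g bs * indicator {\<omega>. path N \<omega> = bs} \<omega>)"
proof -
  have "(\<Sum>bs\<in>{bs. length bs = N}. g bs * indicator {\<omega>. path N \<omega> = bs} \<omega>) =
        (\<Sum>bs\<in>{path N \<omega>}. g bs * indicator {\<omega>. path N \<omega> = bs} \<omega>)"
    using lists_len_finite by (intro sum.mono_neutral_right) (auto split: split_indicator)
  then show ?thesis by simp
qed

lemma measure_path: assumes "length bs = N" shows "measure coin_space {\<omega>. path N \<omega> = bs} = (1/2)^N"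
proof -
  have "ennreal (measure coin_space {\<omega>. path N \<omega> = bs}) = ennreal ((1/2)^N)"
    using emeasure_path[OF assms] CS.emeasure_eq_measure by metis
  then show ?thesis by simp
qed

lemma path_sets: "{\<omega>. path N \<omega> = bs} \<in> sets coin_space"
    using measurable_sets[OF path_meas, of "{bs}"] by (simp add: vimage_def)

lemma path_integrable: "integrable coin_space (\<lambda>\<omega>. g (path N \<omega>) :: real)"
proof -
  have "(\<lambda>\<omega>. g (path N \<omega>)) = (\<lambda>\<omega>. \<Sum>bs\<in>{bs. length bs = N}. g bs * indicator {\<omega>. path N \<omega> = bs} \<omega>)"
    by (rule ext) (rule path_indicator_sum)
  moreover have "integrable coin_space (\<lambda>\<omega>. \<Sum>bs\<in>{bs. length bs = N}. g bs * indicator {\<omega>. path N \<omega> = bs} \<omega>)"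
    by (rule Bochner_Integration.integrable_sum, rule integrable_real_mult_indicator[OF path_sets], rule CS.integrable_const)
  ultimately show ?thesis by simp
qed

lemma bridge:
  "integral\<^sup>L coin_space (\<lambda>\<omega>. g (path N \<omega>) :: real) = (\<Sum>bs\<in>{bs. length bs = N}. g bs) / 2^N"
proof -
  have m: "{\<omega>. path N \<omega> = bs} \<in> sets coin_space" for bs
    using measurable_sets[OF path_meas, of "{bs}"] by (simp add: vimage_def)
  have "integral\<^sup>L coin_space (\<lambda>\<omega>. g (path N \<omega>)) =
    integral\<^sup>L coin_space (\<lambda>\<omega>. \<Sum>bs\<in>{bs. length bs = N}. g bs * indicator {\<omega>. path N \<omega> = bs} \<omega>)"
    by (subst path_indicator_sum) rule
  also have "\<dots> = (\<Sum>bs\<in>{bs. length bs = N}. g bs * measure coin_space {\<omega>. path N \<omega> = bs})"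
  proof (rule trans[OF Bochner_Integration.integral_sum])
    fix bs show "integrable coin_space (\<lambda>\<omega>. g bs * indicator {\<omega>. path N \<omega> = bs} \<omega>)"
      by (intro integrable_real_mult_indicator m) simp
  next
    show "(\<Sum>bs\<in>{bs. length bs = N}. integral\<^sup>L coin_space (\<lambda>\<omega>. g bs * indicator {\<omega>. path N \<omega> = bs} \<omega>)) = 
      (\<Sum>bs\<in>{bs. length bs = N}. g bs * measure coin_space {\<omega>. path N \<omega> = bs})"
      by (intro sum.cong refl) (simp add: m)
  qed
  also have "\<dots> = (\<Sum>bs\<in>{bs. length bs = N}. g bs / 2^N)"
    by (intro sum.cong) (auto simp: measure_path power_one_over)
  finally show ?thesis by (simp add: sum_divide_distrib)
qed

lemma bridge_Suc:
  "integral\<^sup>L coin_space (\<lambda>\<omega>. g (path (Suc n) \<omega>) :: real) =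
   integral\<^sup>L coin_space (\<lambda>\<omega>. (g (True # path n \<omega>) + g (False # path n \<omega>)) / 2)"
proof -
  have "(\<Sum>bs\<in>{bs::bool list. length bs = Suc n}. g bs) = (\<Sum>p\<in>{bs. length bs = n}. g (True # p) + g (False # p))"
    by (subst sum_lists_Suc) (simp add: UNIV_bool sum.distrib add.commute)
  have "(\<Sum>p\<in>{bs::bool list. length bs = n}. (g (True # p) + g (False # p)) / 2) / 2^n =
     (\<Sum>p\<in>{bs::bool list. length bs = n}. g (True # p) + g (False # p)) / 2^(Suc n)"
    by (simp add: sum_divide_distrib[symmetric])
  then show ?thesis
    unfolding bridge[of g "Suc n"] bridge[of "\<lambda>p. (g (True # p) + g (False # p)) / 2" n]
    using \<open>(\<Sum>bs\<in>_. _) = _\<close> by simp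
qed





lemma gen_simp: "{{\<omega> \<in> UNIV. \<omega> k = b} | k b. k < n} = {{\<omega>. \<omega> k = b} | k b. k < n}"
  by simp

lemma space_filt[simp]: "space (coin_filtration n) = UNIV"
  unfolding coin_filtration_def by (simp add: space_measure_of_conv)

lemma sets_filt: "sets (coin_filtration n) = sigma_sets UNIV {{\<omega>. \<omega> k = b} | k b. k < n}"
  unfolding coin_filtration_def space_coin gen_simp by (rule sets_measure_of) auto

lemma gen_in_filt: "k < n \<Longrightarrow> {\<omega>. \<omega> k = b} \<in> sets (coin_filtration n)"
  unfolding sets_filt by (rule sigma_sets.Basic) blast

lemma filt_mono: "n \<le> m \<Longrightarrow> sets (coin_filtration n) \<subseteq> sets (coin_filtration m)"
  unfolding sets_filt by (rule sigma_sets_subseteq) auto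

lemma filt_sub: "subalgebra coin_space (coin_filtration n)"
proof -
  have "sigma_sets UNIV {{\<omega>. \<omega> k = b} | k b. k < n} \<subseteq> sets coin_space"
    using sets.sigma_sets_subset[of "{{\<omega>. \<omega> k = b} | k b. k < n}" coin_space]
    using coin_comp_sets by auto
  then show ?thesis unfolding subalgebra_def sets_filt by simp
qed

lemma path_meas_filt: "path n \<in> coin_filtration n \<rightarrow>\<^sub>M count_space UNIV"
  by (rule path_meas_gen) (auto intro: gen_in_filt)

lemma path_fun_meas_filt: "(\<lambda>\<omega>. g (path n \<omega>) :: real) \<in> borel_measurable (coin_filtration n)"
  using measurable_compose[OF path_meas_filt, of g borel] by simp

lemma filt_sets_path: "A \<in> sets (coin_filtration n) \<Longrightarrow> \<exists>S. A = path n -` S"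
  unfolding sets_filt
proof (induction rule: sigma_sets.induct)
  case (Basic a)
  then obtain k b where a: "a = {\<omega>. \<omega> k = b}" "k < n" by blast
  have "a = path n -` {bs. length bs = n \<and> rev bs ! k = b}"
    using a by (auto simp: path_def rev_map nth_map rev_nth)
  then show ?case by blast
next
  case Empty then show ?case by (intro exI[of _ "{}"]) auto
next
  case (Compl a)
  then obtain S where "a = path n -` S" by blast
  then show ?case by (intro exI[of _ "- S"]) auto
next
  case (Union a)
  then obtain S where "\<And>i. a i = path n -` S i" by metis
  then show ?case by (intro exI[of _ "\<Union>i. S i"]) auto
qed

lemma ff_mid: assumes "bdmc W"
  shows "PW_LR_one W V bs \<le> (PW_LR_one W V (True # bs) + PW_LR_one W V (False # bs)) / 2"
  using PW_plus[OF assms, of V bs] PW_minus[OF assms, of V bs] by simp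

lemma cond_exp_step:
  assumes "bdmc W"
  shows "AE \<omega> in coin_space. PW_LR_one W V (path n \<omega>) \<le>
     real_cond_exp coin_space (coin_filtration n) (\<lambda>\<omega>. PW_LR_one W V (path (Suc n) \<omega>)) \<omega>"
proof -
  have "sigma_finite_subalgebra coin_space (coin_filtration n)"
    by (rule finite_measure_subalgebra_is_sigma_finite)
       (simp add: finite_measure_subalgebra_def finite_measure_subalgebra_axioms_def CS.finite_measure_axioms filt_sub)
  then interpret S: sigma_finite_subalgebra coin_space "coin_filtration n" .
  let ?g = "\<lambda>\<omega>. (PW_LR_one W V (True # path n \<omega>) + PW_LR_one W V (False # path n \<omega>)) / 2"
  have "AE \<omega> in coin_space. real_cond_exp coin_space (coin_filtration n) (\<lambda>\<omega>. PW_LR_one W V (path (Suc n) \<omega>)) \<omega> = ?g \<omega>"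
  proof (rule S.real_cond_exp_charact)
    fix A assume "A \<in> sets (coin_filtration n)"
    then obtain S where A: "A = path n -` S" using filt_sets_path by blast
    have ind: "indicator A \<omega> = indicator S (path n \<omega>)" for \<omega> :: "nat \<Rightarrow> bool"
      unfolding A by (simp split: split_indicator)
    let ?psi = "\<lambda>bs. indicator S (tl bs) * PW_LR_one W V bs"
    have "(\<integral>\<omega>\<in>A. PW_LR_one W V (path (Suc n) \<omega>) \<partial>coin_space) = integral\<^sup>L coin_space (\<lambda>\<omega>. ?psi (path (Suc n) \<omega>))"
      unfolding set_lebesgue_integral_def ind by (simp add: path_Suc)
    also have "\<dots> = integral\<^sup>L coin_space (\<lambda>\<omega>. (?psi (True # path n \<omega>) + ?psi (False # path n \<omega>)) / 2)"
      by (rule bridge_Suc)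
    also have "\<dots> = (\<integral>\<omega>\<in>A. ?g \<omega> \<partial>coin_space)"
      unfolding set_lebesgue_integral_def ind by (simp add: algebra_simps add_divide_distrib)
    finally show "(\<integral>\<omega>\<in>A. PW_LR_one W V (path (Suc n) \<omega>) \<partial>coin_space) = (\<integral>\<omega>\<in>A. ?g \<omega> \<partial>coin_space)" .
  next
    show "integrable coin_space (\<lambda>\<omega>. PW_LR_one W V (path (Suc n) \<omega>))" by (rule path_integrable)
    show "integrable coin_space ?g" by (rule path_integrable)
    show "?g \<in> borel_measurable (coin_filtration n)" by (rule path_fun_meas_filt)
  qed
  then show ?thesis
  proof eventually_elim
    case (elim \<omega>)
    then show ?case using ff_mid[OF assms, of V "path n \<omega>"] by simp
  qed
qed




fun st :: "(nat \<Rightarrow> real) \<Rightarrow> real \<Rightarrow> real \<Rightarrow> nat \<Rightarrow> bool" where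
  "st x a b 0 = (x 0 \<le> a)"
| "st x a b (Suc k) = (if st x a b k then \<not> (b \<le> x (Suc k)) else x (Suc k) \<le> a)"

fun ups :: "(nat \<Rightarrow> real) \<Rightarrow> real \<Rightarrow> real \<Rightarrow> nat \<Rightarrow> nat" where
  "ups x a b 0 = 0"
| "ups x a b (Suc k) = ups x a b k + (if st x a b k \<and> b \<le> x (Suc k) then 1 else 0)"

lemma st_cong: "(\<And>i. i \<le> k \<Longrightarrow> x i = y i) \<Longrightarrow> st x a b k = st y a b k"
  by (induction k) auto

lemma ups_cong: "(\<And>i. i \<le> k \<Longrightarrow> x i = y i) \<Longrightarrow> ups x a b k = ups y a b k"
proof (induction k)
  case (Suc k)
  then show ?case using st_cong[of k x y a b] by simp
qed simp

lemma ups_inv: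
  "(\<Sum>j<k. (if st x a b j then 1 else 0) * (x (Suc j) - x j)) \<ge>
     (b - a) * real (ups x a b k) + (if st x a b k then x k - a else 0)"
proof (induction k)
  case 0 then show ?case by simp
next
  case (Suc k)
  show ?case
  proof (cases "st x a b k")
    case True
    then show ?thesis using Suc by (cases "b \<le> x (Suc k)") (auto simp: algebra_simps)
  next
    case False
    then show ?thesis using Suc by (cases "x (Suc k) \<le> a") (auto simp: algebra_simps)
  qed
qed

lemma ups_mono: "k \<le> l \<Longrightarrow> ups x a b k \<le> ups x a b l"
  by (induction l) (auto simp: le_Suc_eq)

lemma st_if_le: "x j \<le> a \<Longrightarrow> a < b \<Longrightarrow> st x a b j"
  by (cases j) auto

lemma ups_incr: "st x a b j \<Longrightarrow> b \<le> x (Suc (j + d)) \<Longrightarrow> ups x a b j < ups x a b (Suc (j + d))"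
proof (induction d arbitrary: j)
  case 0 then show ?case by simp
next
  case (Suc d)
  show ?case
  proof (cases "b \<le> x (Suc j)")
    case True
    then have "ups x a b j < ups x a b (Suc j)" using Suc.prems by simp
    also have "\<dots> \<le> ups x a b (Suc (j + Suc d))" by (rule ups_mono) simp
    finally show ?thesis .
  next
    case False
    then have "st x a b (Suc j)" using Suc.prems by simp
    from Suc.IH[OF this] Suc.prems have "ups x a b (Suc j) < ups x a b (Suc (Suc j + d))" by simp
    moreover have "ups x a b j \<le> ups x a b (Suc j)" by simp
    ultimately show ?thesis by simp
  qed
qed

lemma ups_unbounded:
  assumes ab: "a < b" and lo: "\<And>N. \<exists>n\<ge>N. x n \<le> a" and hi: "\<And>N. \<exists>n\<ge>N. b \<le> x n"
  shows "\<exists>k. ups x a b k \<ge> N"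
proof (induction N)
  case 0 then show ?case by simp
next
  case (Suc N)
  then obtain k where k: "ups x a b k \<ge> N" by blast
  obtain j where j: "j \<ge> k" "x j \<le> a" using lo by blast
  obtain j' where j': "j' \<ge> Suc j" "b \<le> x j'" using hi by blast
  then obtain d where "j' = Suc j + d" using le_iff_add by blast
  then have d: "j' = Suc (j + d)" by simp
  have "ups x a b j < ups x a b j'" unfolding d
    by (rule ups_incr[OF st_if_le[of x j a b, OF j(2) ab]]) (use j' d in simp)
  moreover have "ups x a b k \<le> ups x a b j" using j(1) by (rule ups_mono)
  ultimately show ?case using k by (intro exI[of _ j']) simp
qed

lemma conv_from_ups:
  fixes x :: "nat \<Rightarrow> real"
  assumes bnd: "\<And>k. 0 \<le> x k \<and> x k \<le> 1"
    and U: "\<And>a b::rat. a < b \<Longrightarrow> \<exists>C::real. \<forall>k. real (ups x (of_rat a) (of_rat b) k) \<le> C"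
  shows "convergent x"
proof -
  let ?lo = "liminf (\<lambda>n. ereal (x n))" and ?hi = "limsup (\<lambda>n. ereal (x n))"
  have le: "?lo \<le> ?hi" by (rule Liminf_le_Limsup) simp
  have lo0: "0 \<le> ?lo" using bnd by (intro Liminf_bounded) auto
  have hi1: "?hi \<le> 1" using bnd by (intro Limsup_bounded) auto
  show ?thesis
  proof (cases "?lo < ?hi")
    case False
    then have eq: "?lo = ?hi" using le by simp
    obtain L where L: "?hi = ereal L" using lo0 hi1 eq by (cases ?hi) auto
    have "x \<longlonglongrightarrow> L" by (rule limsup_le_liminf_real) (use L eq in auto)
    then show ?thesis by (rule convergentI)
  next
    case True
    obtain r1 :: rat where r1: "?lo < real_of_rat r1" "real_of_rat r1 < ?hi"
      using ereal_dense3[OF True] by blast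
    obtain r2 :: rat where r2: "ereal (real_of_rat r1) < real_of_rat r2" "real_of_rat r2 < ?hi"
      using ereal_dense3[OF r1(2)] by blast
    have r12: "r1 < r2" using r2(1) by (simp add: of_rat_less)
    have lo: "\<exists>n\<ge>N. x n \<le> of_rat r1" for N
    proof -
      from r1(1) have "\<not> (ereal (of_rat r1) \<le> ?lo)" by simp
      then obtain y where y: "y < ereal (of_rat r1)" "\<not> eventually (\<lambda>n. y < ereal (x n)) sequentially"
        unfolding le_Liminf_iff by blast
      then obtain n where n: "n \<ge> N" "\<not> y < ereal (x n)" unfolding eventually_sequentially by blast
      have "ereal (x n) < ereal (of_rat r1)" using n(2) y(1) by (meson le_less_trans not_less)
      then show ?thesis using n(1) by (intro exI[of _ n]) simp
    qed
    have hi: "\<exists>n\<ge>N. of_rat r2 \<le> x n" for N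
    proof -
      from r2(2) have "\<not> (?hi \<le> ereal (of_rat r2))" by simp
      then obtain y where y: "y > ereal (of_rat r2)" "\<not> eventually (\<lambda>n. y > ereal (x n)) sequentially"
        unfolding Limsup_le_iff by blast
      then obtain n where n: "n \<ge> N" "\<not> y > ereal (x n)" unfolding eventually_sequentially by blast
      have "ereal (of_rat r2) < ereal (x n)" using n(2) y(1) by (meson less_le_trans not_less)
      then show ?thesis using n(1) by (intro exI[of _ n]) simp
    qed
    obtain C where C: "\<forall>k. real (ups x (of_rat r1) (of_rat r2) k) \<le> C" using U[OF r12] by blast
    obtain k where "ups x (of_rat r1) (of_rat r2) k \<ge> nat \<lceil>C\<rceil> + 1"
      using ups_unbounded[of "of_rat r1" "of_rat r2" x, OF _ lo hi] r12 by (auto simp: of_rat_less)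
    then have "real (ups x (of_rat r1) (of_rat r2) k) \<ge> real (nat \<lceil>C\<rceil> + 1)" by linarith
    moreover have "real (nat \<lceil>C\<rceil> + 1) > C" by linarith
    ultimately have False using C[rule_format, of k] by linarith
    then show ?thesis ..
  qed
qed




definition seqof :: "(bool list \<Rightarrow> real) \<Rightarrow> bool list \<Rightarrow> nat \<Rightarrow> real" where
  "seqof f p i = f (drop (length p - i) p)"

lemma path_drop: "i \<le> j \<Longrightarrow> drop (j - i) (path j \<omega>) = path i \<omega>"
  unfolding path_def by (simp add: drop_rev take_map take_upt)

lemma seqof_path: "i \<le> j \<Longrightarrow> seqof f (path j \<omega>) i = f (path i \<omega>)"
  unfolding seqof_def by (simp add: path_drop)

lemma st_path: "st (\<lambda>i. f (path i \<omega>)) a b j = st (seqof f (path j \<omega>)) a b j"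
  by (rule st_cong) (simp add: seqof_path)

lemma ups_path: "ups (\<lambda>i. f (path i \<omega>)) a b j = ups (seqof f (path j \<omega>)) a b j"
  by (rule ups_cong) (simp add: seqof_path)

lemma path_fun_meas_ennreal: "(\<lambda>\<omega>. g (path N \<omega>) :: ennreal) \<in> borel_measurable coin_space"
  using measurable_compose[OF path_meas, of g borel] by simp

context
  fixes W V :: "'y::finite \<Rightarrow> bool \<Rightarrow> real"
  assumes W: "bdmc W"
begin

abbreviation "fW \<equiv> PW_LR_one W V"

lemma step_nonneg:
  assumes G: "\<And>p. 0 \<le> G p"
  shows "0 \<le> integral\<^sup>L coin_space (\<lambda>\<omega>. G (path j \<omega>) * (fW (path (Suc j) \<omega>) - fW (path j \<omega>)))"
proof -
  let ?psi = "\<lambda>bs. G (tl bs) * (fW bs - fW (tl bs))"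
  have "integral\<^sup>L coin_space (\<lambda>\<omega>. G (path j \<omega>) * (fW (path (Suc j) \<omega>) - fW (path j \<omega>))) =
        integral\<^sup>L coin_space (\<lambda>\<omega>. ?psi (path (Suc j) \<omega>))"
    by (simp add: path_Suc)
  also have "\<dots> = integral\<^sup>L coin_space (\<lambda>\<omega>. (?psi (True # path j \<omega>) + ?psi (False # path j \<omega>)) / 2)"
    by (rule bridge_Suc)
  also have "\<dots> = integral\<^sup>L coin_space (\<lambda>\<omega>. G (path j \<omega>) *
      ((fW (True # path j \<omega>) + fW (False # path j \<omega>)) / 2 - fW (path j \<omega>)))"
    by (simp add: algebra_simps add_divide_distrib diff_divide_distrib)
  finally show ?thesis
    using ff_mid[OF W, of V] G by (auto intro!: integral_nonneg mult_nonneg_nonneg)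
qed

lemma ups_expect:
  assumes ab: "a < b"
  shows "(b - a) * integral\<^sup>L coin_space (\<lambda>\<omega>. real (ups (\<lambda>i. fW (path i \<omega>)) a b k)) \<le> 1 + \<bar>a\<bar>"
proof -
  define x where "x \<omega> = (\<lambda>i. fW (path i \<omega>))" for \<omega>
  define H where "H j \<omega> = (if st (x \<omega>) a b j then 1 else 0 :: real)" for j \<omega>
  define D where "D j \<omega> = (1 - H j \<omega>) * (x \<omega> (Suc j) - x \<omega> j)" for j \<omega>
  have x01: "0 \<le> x \<omega> i" "x \<omega> i \<le> 1" for \<omega> i using PW_bounds[OF W] by (auto simp: x_def)
  have pw: "(b - a) * real (ups (x \<omega>) a b k) \<le> 1 + \<bar>a\<bar> - (\<Sum>j<k. D j \<omega>)" for \<omega>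
  proof -
    have "(\<Sum>j<k. H j \<omega> * (x \<omega> (Suc j) - x \<omega> j)) \<ge>
       (b - a) * real (ups (x \<omega>) a b k) + (if st (x \<omega>) a b k then x \<omega> k - a else 0)"
      unfolding H_def by (rule ups_inv)
    moreover have "(if st (x \<omega>) a b k then x \<omega> k - a else 0) \<ge> - \<bar>a\<bar>" using x01[of \<omega> k] by auto
    moreover have "(\<Sum>j<k. H j \<omega> * (x \<omega> (Suc j) - x \<omega> j)) = (\<Sum>j<k. x \<omega> (Suc j) - x \<omega> j) - (\<Sum>j<k. D j \<omega>)"
      unfolding D_def sum_subtractf[symmetric] by (intro sum.cong) (auto simp: algebra_simps)
    moreover have "(\<Sum>j<k. x \<omega> (Suc j) - x \<omega> j) = x \<omega> k - x \<omega> 0" by (rule sum_lessThan_telescope)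
    ultimately show ?thesis using x01[of \<omega> k] x01[of \<omega> 0] by linarith
  qed
  have Dint: "integrable coin_space (D j)" for j
  proof -
    define psi where "psi bs = (1 - (if st (seqof fW (tl bs)) a b j then 1 else 0)) * (fW bs - fW (tl bs))" for bs
    have "D j = (\<lambda>\<omega>. psi (path (Suc j) \<omega>))"
      by (rule ext) (simp add: psi_def D_def H_def x_def st_path path_Suc)
    then show ?thesis using path_integrable[of psi "Suc j"] by simp
  qed
  have Dnn: "0 \<le> integral\<^sup>L coin_space (D j)" for j
  proof -
    define G where "G p = 1 - (if st (seqof fW p) a b j then 1 else 0 :: real)" for p
    have "D j = (\<lambda>\<omega>. G (path j \<omega>) * (fW (path (Suc j) \<omega>) - fW (path j \<omega>)))"
      by (rule ext) (simp add: G_def D_def H_def x_def st_path)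
    moreover have "0 \<le> integral\<^sup>L coin_space (\<lambda>\<omega>. G (path j \<omega>) * (fW (path (Suc j) \<omega>) - fW (path j \<omega>)))"
      by (rule step_nonneg) (simp add: G_def)
    ultimately show ?thesis by simp
  qed
  have Uint: "integrable coin_space (\<lambda>\<omega>. real (ups (x \<omega>) a b k))"
  proof -
    define psi where "psi p = real (ups (seqof fW p) a b k)" for p
    have "(\<lambda>\<omega>. real (ups (x \<omega>) a b k)) = (\<lambda>\<omega>. psi (path k \<omega>))"
      by (rule ext) (simp add: psi_def x_def ups_path)
    then show ?thesis using path_integrable[of psi k] by simp
  qed
  have "(b - a) * integral\<^sup>L coin_space (\<lambda>\<omega>. real (ups (x \<omega>) a b k)) =
      integral\<^sup>L coin_space (\<lambda>\<omega>. (b - a) * real (ups (x \<omega>) a b k))" by simp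
  also have "\<dots> \<le> integral\<^sup>L coin_space (\<lambda>\<omega>. 1 + \<bar>a\<bar> - (\<Sum>j<k. D j \<omega>))"
    by (rule integral_mono) (use pw Uint Dint in auto)
  also have "\<dots> = 1 + \<bar>a\<bar> - (\<Sum>j<k. integral\<^sup>L coin_space (D j))"
    using Dint CS.prob_space by (simp add: Bochner_Integration.integral_sum)
  also have "\<dots> \<le> 1 + \<bar>a\<bar>" using Dnn by (simp add: sum_nonneg)
  finally show ?thesis by (simp add: x_def)
qed

lemma ups_bounded_AE:
  assumes ab: "a < b"
  shows "AE \<omega> in coin_space. \<exists>C::real. \<forall>k. real (ups (\<lambda>i. fW (path i \<omega>)) a b k) \<le> C"
proof -
  define u where "u k \<omega> = ennreal (real (ups (\<lambda>i. fW (path i \<omega>)) a b k))" for k \<omega>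
  have um: "u k \<in> borel_measurable coin_space" for k
    unfolding u_def ups_path by (rule path_fun_meas_ennreal)
  have uinc: "incseq u"
    by (auto simp: incseq_def le_fun_def u_def intro!: ennreal_leI ups_mono)
  have ui: "integral\<^sup>N coin_space (u k) \<le> ennreal ((1 + \<bar>a\<bar>) / (b - a))" for k
  proof -
    have "integral\<^sup>N coin_space (u k) = ennreal (integral\<^sup>L coin_space (\<lambda>\<omega>. real (ups (\<lambda>i. fW (path i \<omega>)) a b k)))"
      unfolding u_def by (rule nn_integral_eq_integral) (use path_integrable[of "\<lambda>p. real (ups (seqof fW p) a b k)" k] in \<open>auto simp: ups_path\<close>)
    also have "\<dots> \<le> ennreal ((1 + \<bar>a\<bar>) / (b - a))"
      using ups_expect[OF ab, of k] ab by (intro ennreal_leI) (simp add: field_simps)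
    finally show ?thesis .
  qed
  have "(\<integral>\<^sup>+ \<omega>. (SUP k. u k \<omega>) \<partial>coin_space) = (SUP k. integral\<^sup>N coin_space (u k))"
    by (rule nn_integral_monotone_convergence_SUP[OF uinc um])
  also have "\<dots> \<le> ennreal ((1 + \<bar>a\<bar>) / (b - a))" by (rule SUP_least) (rule ui)
  finally have I: "(\<integral>\<^sup>+ \<omega>. (SUP k. u k \<omega>) \<partial>coin_space) \<le> ennreal ((1 + \<bar>a\<bar>) / (b - a))" .
  have "(\<integral>\<^sup>+ \<omega>. (SUP k. u k \<omega>) \<partial>coin_space) \<noteq> \<infinity>"
    unfolding infinity_ennreal_def by (rule neq_top_trans[OF ennreal_neq_top I])
  then have "AE \<omega> in coin_space. (SUP k. u k \<omega>) \<noteq> \<infinity>"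
    by (intro nn_integral_PInf_AE) (use um in measurable)
  then show ?thesis
  proof eventually_elim
    case (elim \<omega>)
    have "real (ups (\<lambda>i. fW (path i \<omega>)) a b k) \<le> enn2real (SUP k. u k \<omega>)" for k
    proof -
      have "u k \<omega> \<le> (SUP k. u k \<omega>)" by (rule SUP_upper) simp
      then show ?thesis using elim unfolding u_def
        by (metis enn2real_ennreal enn2real_mono infinity_ennreal_def of_nat_0_le_iff top.not_eq_extremum)
    qed
    then show ?case by blast
  qed
qed

lemma conv_AE: "AE \<omega> in coin_space. convergent (\<lambda>n. fW (path n \<omega>))"
proof -
  have "AE \<omega> in coin_space. \<forall>a::rat. \<forall>b::rat. a < b \<longrightarrow>
      (\<exists>C::real. \<forall>k. real (ups (\<lambda>i. fW (path i \<omega>)) (of_rat a) (of_rat b) k) \<le> C)"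
    unfolding AE_all_countable
  proof (intro allI)
    fix a b :: rat
    show "AE \<omega> in coin_space. a < b \<longrightarrow> (\<exists>C::real. \<forall>k. real (ups (\<lambda>i. fW (path i \<omega>)) (of_rat a) (of_rat b) k) \<le> C)"
    proof (cases "a < b")
      case True
      then have "of_rat a < (of_rat b :: real)" by (simp add: of_rat_less)
      from ups_bounded_AE[OF this] show ?thesis by eventually_elim simp
    qed simp
  qed
  then show ?thesis
  proof eventually_elim
    case (elim \<omega>)
    show ?case by (rule conv_from_ups) (use PW_bounds[OF W] elim in auto)
  qed
qed

end

definition phi :: "nat \<Rightarrow> bool list \<Rightarrow> real" where
  "phi j bs = (if \<forall>i<j. bs ! i then 1 else 0)"

lemma phi_Suc: "phi (Suc j) (b # bs) = (if b then phi j bs else 0)"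
  unfolding phi_def by (auto simp: less_Suc_eq_0_disj)

lemma phi_int: "j \<le> m \<Longrightarrow> integral\<^sup>L coin_space (\<lambda>\<omega>. phi j (path m \<omega>)) = (1/2)^j"
proof (induction j arbitrary: m)
  case 0 then show ?case using CS.prob_space by (simp add: phi_def)
next
  case (Suc j)
  then obtain m' where m: "m = Suc m'" "j \<le> m'" by (cases m) auto
  have "integral\<^sup>L coin_space (\<lambda>\<omega>. phi (Suc j) (path m \<omega>)) =
      integral\<^sup>L coin_space (\<lambda>\<omega>. (phi (Suc j) (True # path m' \<omega>) + phi (Suc j) (False # path m' \<omega>)) / 2)"
    unfolding m by (rule bridge_Suc)
  also have "\<dots> = integral\<^sup>L coin_space (\<lambda>\<omega>. phi j (path m' \<omega>)) / 2"
    by (simp add: phi_Suc)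
  finally show ?case using Suc.IH[OF m(2)] by simp
qed

lemma inf_false_AE: "AE \<omega> in coin_space. \<forall>N. \<exists>k\<ge>N. \<not> \<omega> k"
  unfolding AE_all_countable
proof
  fix N
  define Z where "Z = (\<Inter>k\<in>{N..}. {\<omega>::nat\<Rightarrow>bool. \<omega> k = True})"
  have Zs: "Z \<in> sets coin_space" unfolding Z_def
    using coin_comp_sets[of _ True] by (intro sets.countable_INT) auto
  have Zle: "measure coin_space Z \<le> (1/2)^j" for j
  proof -
    let ?A = "path (N + j) -` {bs. phi j bs = 1}"
    have As: "?A \<in> sets coin_space"
      using measurable_sets[OF path_meas, of "{bs. phi j bs = 1}" "N + j"] by simp
    have "Z \<subseteq> ?A"
    proof
      fix \<omega> assume "\<omega> \<in> Z"
      then have "\<forall>k\<ge>N. \<omega> k" by (auto simp: Z_def)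
      then have "\<forall>i<j. path (N + j) \<omega> ! i"
        by (auto simp: path_def rev_nth)
      then show "\<omega> \<in> ?A" by (simp add: phi_def)
    qed
    then have "measure coin_space Z \<le> measure coin_space ?A"
      by (intro CS.finite_measure_mono As)
    also have "measure coin_space ?A = integral\<^sup>L coin_space (indicator ?A)" by simp
    also have "indicator ?A = (\<lambda>\<omega>. phi j (path (N + j) \<omega>))"
      by (rule ext) (simp add: phi_def split: split_indicator)
    also have "integral\<^sup>L coin_space \<dots> = (1/2)^j" by (rule phi_int) simp
    finally show ?thesis .
  qed
  have "measure coin_space Z = 0"
  proof (rule ccontr)
    assume "measure coin_space Z \<noteq> 0"
    then have "measure coin_space Z > 0" by (simp add: less_le)
    then obtain j where "(1/2::real)^j < measure coin_space Z" using real_arch_pow_inv[of _ "1/2::real"] by auto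
    with Zle[of j] show False by simp
  qed
  then have "Z \<in> null_sets coin_space" using Zs by (simp add: CS.emeasure_eq_measure null_sets_def)
  then show "AE \<omega> in coin_space. \<exists>k\<ge>N. \<not> \<omega> k"
    by (rule AE_I') (auto simp: Z_def)
qed




lemma limit01:
  fixes x :: "nat \<Rightarrow> real"
  assumes lim: "x \<longlonglongrightarrow> L" and fr: "\<And>N. \<exists>k\<ge>N. x (Suc k) = 2 * x k - (x k)^2"
  shows "L \<in> {0, 1}"
proof -
  have "L = 2 * L - L^2"
  proof (rule ccontr)
    assume ne: "L \<noteq> 2 * L - L^2"
    have "(\<lambda>k. x (Suc k) - (2 * x k - (x k)^2)) \<longlonglongrightarrow> L - (2 * L - L^2)"
      by (intro tendsto_intros lim LIMSEQ_Suc)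
    moreover have "L - (2 * L - L^2) \<noteq> 0" using ne by simp
    ultimately have "eventually (\<lambda>k. x (Suc k) - (2 * x k - (x k)^2) \<noteq> 0) sequentially"
      by (rule tendsto_imp_eventually_ne)
    then obtain N where "\<forall>k\<ge>N. x (Suc k) - (2 * x k - (x k)^2) \<noteq> 0"
      unfolding eventually_sequentially by blast
    with fr[of N] show False by auto
  qed
  then have "L * (L - 1) = 0" by (simp add: power2_eq_square algebra_simps)
  then show ?thesis by auto
qed

theorem lemma1:
  fixes W V :: "'y::finite \<Rightarrow> bool \<Rightarrow> real"
  assumes "bdmc W" and "bdmc V"
  defines "X \<equiv> (\<lambda>n \<omega>. PW_LR_one W V (path n \<omega>))"
  shows "submartingale coin_space coin_filtration X
       \<and> (\<forall>n \<omega>. X n \<omega> \<in> {0..1})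
       \<and> (AE \<omega> in coin_space. convergent (\<lambda>n. X n \<omega>))
       \<and> (AE \<omega> in coin_space. \<exists>l\<in>{0,1}. (\<lambda>n. X n \<omega>) \<longlonglongrightarrow> l)"
proof (intro conjI)
  show "submartingale coin_space coin_filtration X"
    unfolding submartingale_def X_def
    using filt_sub filt_mono path_fun_meas_filt path_integrable cond_exp_step[OF assms(1)]
    by blast
  show "\<forall>n \<omega>. X n \<omega> \<in> {0..1}" unfolding X_def using PW_bounds[OF assms(1)] by simp
  show C: "AE \<omega> in coin_space. convergent (\<lambda>n. X n \<omega>)" unfolding X_def by (rule conv_AE[OF assms(1)])
  show "AE \<omega> in coin_space. \<exists>l\<in>{0,1}. (\<lambda>n. X n \<omega>) \<longlonglongrightarrow> l"
    using C inf_false_AE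
  proof eventually_elim
    case (elim \<omega>)
    then obtain L where L: "(\<lambda>n. X n \<omega>) \<longlonglongrightarrow> L" by (auto simp: convergent_def)
    have "\<exists>k\<ge>N. X (Suc k) \<omega> = 2 * X k \<omega> - (X k \<omega>)^2" for N
    proof -
      obtain k where k: "k \<ge> N" "\<not> \<omega> k" using elim(2) by blast
      have "X (Suc k) \<omega> = 2 * X k \<omega> - (X k \<omega>)^2"
        unfolding X_def path_Suc using k(2) PW_minus[OF assms(1)] by simp
      then show ?thesis using k(1) by blast
    qed
    with L have "L \<in> {0, 1}" by (rule limit01[of _ L])
    with L show ?case by blast
  qed
qed


end
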